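(* Let $\mathscr X=[0,1]^4$ with the Euclidean norm $\|\cdot\|_2$. Let $\mathbf x_1=(1/2,1/2,1/2,1/2)$ and, for $n\ge1$, let $\mathbf x_{n+1}$ be any point of $\mathrm{Arg}\max_{\mathbf x\in\mathscr X}\min_{1\le i\le n}\|\mathbf x-\mathbf x_i\|_2$, with $\mathbf X_n=\{\mathbf x_1,\ldots,\mathbf x_n\}$. Let $n_m=(2^m+1)^4+2^{4m}$, $\gamma_m=2^{-m}$, $\ell_m=6\cdot2^{2m}(2^m+1)^2$, and for $n\ge17$ let $m=m(n)$ be the unique integer with $n_m\le n<n_{m+1}$. Then: - for $n=n_m$: $\mathsf{SR}(\mathbf X_n)=\gamma_m/2$, $\mathsf{CR}(\mathbf X_n)=\gamma_m\sqrt2/2$, $\mathsf{MR}(\mathbf X_n)=\sqrt2$; - for $n=n_m+1,\ldots,n_m+\ell_m-1$: $\mathsf{SR}(\mathbf X_n)=\gamma_m/(2\sqrt2)$, $\mathsf{CR}(\mathbf X_n)=\gamma_m\sqrt2/2$, $\mathsf{MR}(\mathbf X_n)=2$; - for $n=n_m+\ell_m$: $\mathsf{SR}(\mathbf X_n)=\gamma_m/(2\sqrt2)$, $\mathsf{CR}(\mathbf X_n)=\gamma_m/2$, $\mathsf{MR}(\mathbf X_n)=\sqrt2$; - for $n=n_m+\ell_m+1,\ldots,n_{m+1}-1$: $\mathsf{SR}(\mathbf X_n)=\gamma_m/4$, $\mathsf{CR}(\mathbf X_n)=\gamma_m/2$, $\mathsf{MR}(\mathbf X_n)=2$.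
   Context: Fill distance $\mathsf{CR}(\mathbf X_n)=\sup_{\mathbf x\in\mathscr X}\min_{i\le n}\|\mathbf x-\mathbf x_i\|_2$; separation radius $\mathsf{SR}(\mathbf X_n)=\tfrac12\min_{i\ne j\le n}\|\mathbf x_i-\mathbf x_j\|_2$; mesh-ratio $\mathsf{MR}(\mathbf X_n)=\mathsf{CR}(\mathbf X_n)/\mathsf{SR}(\mathbf X_n)$. *)

theory Defs
  imports "HOL-Analysis.Analysis"
begin

definition cube4 :: "(real^4) set" where
  "cube4 = {v. \<forall>i. 0 \<le> v $ i \<and> v $ i \<le> 1}"

text \<open>Points are indexed from 1: X_n = {x 1, ..., x n}.\<close>
definition min_dist :: "(nat \<Rightarrow> real^4) \<Rightarrow> nat \<Rightarrow> real^4 \<Rightarrow> real" where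
  "min_dist x n y = Min {dist y (x i) | i. i \<in> {1..n}}"

definition CR :: "(nat \<Rightarrow> real^4) \<Rightarrow> nat \<Rightarrow> real" where
  "CR x n = (SUP y\<in>cube4. min_dist x n y)"

definition SR :: "(nat \<Rightarrow> real^4) \<Rightarrow> nat \<Rightarrow> real" where
  "SR x n = Min {dist (x i) (x j) | i j. i \<in> {1..n} \<and> j \<in> {1..n} \<and> i \<noteq> j} / 2"

definition MR :: "(nat \<Rightarrow> real^4) \<Rightarrow> nat \<Rightarrow> real" where
  "MR x n = CR x n / SR x n"

definition n_m :: "nat \<Rightarrow> nat" where
  "n_m m = (2^m + 1)^4 + 2^(4*m)"

definition gamma_m :: "nat \<Rightarrow> real" where
  "gamma_m m = 1 / 2^m"

definition l_m :: "nat \<Rightarrow> nat" where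
  "l_m m = 6 * 2^(2*m) * (2^m + 1)^2"

end

theory Submission
  imports Defs "HOL-Library.FuncSet"
begin



lemma dist_sq: "(dist (v::real^4) w)^2 = (\<Sum>t\<in>UNIV. (v$t - w$t)^2)"
  unfolding dist_vec_def L2_set_def dist_real_def
  by (simp add: sum_nonneg)

lemma card_compl4: "card (- (s::4 set)) = 4 - card s"
proof -
  have "card (UNIV::4 set) = 4" by simp
  then show ?thesis by (metis Compl_eq_Diff_UNIV card_Diff_subset finite subset_UNIV)
qed

lemma sum_if_card: "(\<Sum>t\<in>(UNIV::4 set). if t \<in> s then c else 0) = real (card s) * c"
  by (simp add: sum.If_cases)

lemma dist_ge_two: "(a::4) \<noteq> b \<Longrightarrow> (v$a - w$a)^2 + (v$b - w$b)^2 \<le> (dist (v::real^4) w)^2"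
proof -
  assume "a \<noteq> b"
  have "(\<Sum>t\<in>{a,b}. (v$t - w$t)^2) \<le> (\<Sum>t\<in>UNIV. (v$t - w$t)^2)"
    by (rule sum_mono2) auto
  thus ?thesis using \<open>a\<noteq>b\<close> by (simp add: dist_sq)
qed

lemma choose42: "(4::nat) choose 2 = 6"
  by (simp add: numeral_eq_Suc)

lemma card_vecset:
  assumes "\<And>t. finite (F t)"
  shows "finite {v::real^4. \<forall>t. v$t \<in> F t} \<and> card {v::real^4. \<forall>t. v$t \<in> F t} = (\<Prod>t\<in>UNIV. card (F t))"
proof -
  have eq: "{v::real^4. \<forall>t. v$t \<in> F t} = vec_lambda ` (PiE UNIV F)"
  proof safe
    fix v :: "real^4" assume "\<forall>t. v$t \<in> F t"
    then have "vec_nth v \<in> PiE UNIV F" by auto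
    moreover have "v = vec_lambda (vec_nth v)" by simp
    ultimately show "v \<in> vec_lambda ` PiE UNIV F" by blast
  next
    fix f t assume "f \<in> PiE UNIV F"
    then show "vec_lambda f $ t \<in> F t" by auto
  qed
  have inj: "inj_on vec_lambda (PiE UNIV F)"
    by (rule inj_onI) (metis vec_lambda_inverse UNIV_I)
  show ?thesis unfolding eq
    using assms by (simp add: card_image[OF inj] card_PiE finite_PiE)
qed



definition Z0 :: "nat \<Rightarrow> real set" where "Z0 K = (\<lambda>k. real k / real K) ` {0..K}"
definition Z2 :: "nat \<Rightarrow> real set" where "Z2 K = (\<lambda>k. (2*real k + 1)/(2*real K)) ` {..<K}"
definition PP :: "nat \<Rightarrow> 4 set \<Rightarrow> (real^4) set" where
  "PP K s = {v. \<forall>t. v$t \<in> (if t \<in> s then Z2 K else Z0 K)}"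
definition AA :: "nat \<Rightarrow> (real^4) set" where "AA K = PP K {} \<union> PP K UNIV"
definition HH :: "nat \<Rightarrow> (real^4) set" where "HH K = (\<Union>s\<in>{s. card s = 2}. PP K s)"
definition BB :: "nat \<Rightarrow> (real^4) set" where "BB K = AA K \<union> HH K"

lemma Z0_Z2_disj: "K \<ge> 1 \<Longrightarrow> a \<in> Z0 K \<Longrightarrow> a \<in> Z2 K \<Longrightarrow> False"
proof -
  assume K: "K \<ge> 1" "a \<in> Z0 K" "a \<in> Z2 K"
  obtain k where k1: "a = real k / real K" using K unfolding Z0_def by auto
  obtain j where j1: "a = (2*real j+1)/(2*real K)" using K unfolding Z2_def by auto
  have "real K * (2 * real k) = real K * (2 * real j + 1)" using k1 j1 K(1) by (simp add: field_simps)
  then have "2 * real k = 2 * real j + 1" using K(1) by simp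
  then have "2 * k = 2 * j + 1" by linarith
  then show False by presburger
qed

lemma Z0_range: "K \<ge> 1 \<Longrightarrow> a \<in> Z0 K \<Longrightarrow> 0 \<le> a \<and> a \<le> 1"
  unfolding Z0_def by (auto simp: field_simps)

lemma Z2_range: "K \<ge> 1 \<Longrightarrow> a \<in> Z2 K \<Longrightarrow> 0 \<le> a \<and> a \<le> 1"
  unfolding Z2_def by (auto simp: field_simps)

lemma card_Z0: "K \<ge> 1 \<Longrightarrow> finite (Z0 K) \<and> card (Z0 K) = K + 1"
proof -
  assume K: "K \<ge> 1"
  have "inj_on (\<lambda>k. real k / real K) {0..K}"
    by (rule inj_onI) (use K in \<open>auto simp: field_simps\<close>)
  then show ?thesis unfolding Z0_def by (simp add: card_image)
qed

lemma card_Z2: "K \<ge> 1 \<Longrightarrow> finite (Z2 K) \<and> card (Z2 K) = K"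
proof -
  assume K: "K \<ge> 1"
  have "inj_on (\<lambda>k. (2*real k + 1)/(2*real K)) {..<K}"
    by (rule inj_onI) (use K in \<open>auto simp: field_simps\<close>)
  then show ?thesis unfolding Z2_def by (simp add: card_image)
qed

lemma Z0_sub: "K \<ge> 1 \<Longrightarrow> a \<in> Z0 K \<Longrightarrow> a \<in> Z0 (2*K)"
proof -
  assume K: "K \<ge> 1" "a \<in> Z0 K"
  then obtain k where k: "k \<le> K" "a = real k / real K" unfolding Z0_def by auto
  then have "a = real (2*k) / real (2*K)" using K by (simp add: field_simps)
  moreover have "2*k \<in> {0..2*K}" using k by auto
  ultimately show ?thesis unfolding Z0_def by blast
qed

lemma Z2_sub: "K \<ge> 1 \<Longrightarrow> a \<in> Z2 K \<Longrightarrow> a \<in> Z0 (2*K)"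
proof -
  assume K: "K \<ge> 1" "a \<in> Z2 K"
  then obtain k where k: "k < K" "a = (2*real k + 1)/(2*real K)" unfolding Z2_def by auto
  then have "a = real (2*k+1) / real (2*K)" using K by (simp add: field_simps)
  moreover have "2*k+1 \<in> {0..2*K}" using k by auto
  ultimately show ?thesis unfolding Z0_def by blast
qed

lemma Z0_sep: "K \<ge> 1 \<Longrightarrow> a \<in> Z0 K \<Longrightarrow> b \<in> Z0 K \<Longrightarrow> a \<noteq> b \<Longrightarrow> (1/real K)^2 \<le> (a - b)^2"
proof -
  assume K: "K \<ge> 1" "a \<in> Z0 K" "b \<in> Z0 K" "a \<noteq> b"
  then obtain k j where kj: "a = real k / real K" "b = real j / real K" unfolding Z0_def by auto
  then have "k \<noteq> j" using K by auto
  then have "1 \<le> \<bar>real k - real j\<bar>" by linarith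
  then have "1 \<le> (real k - real j)^2"
    by (metis abs_ge_self abs_le_square_iff abs_one le_trans one_le_power power_one)
  moreover have "a - b = (real k - real j) / real K" using kj by (simp add: diff_divide_distrib)
  then have "(a - b)^2 = (real k - real j)^2 / (real K)^2" by (simp add: power_divide)
  ultimately show ?thesis using K by (simp add: power_divide divide_right_mono)
qed

lemma Z2_sep: "K \<ge> 1 \<Longrightarrow> a \<in> Z2 K \<Longrightarrow> b \<in> Z2 K \<Longrightarrow> a \<noteq> b \<Longrightarrow> (1/real K)^2 \<le> (a - b)^2"
proof -
  assume K: "K \<ge> 1" "a \<in> Z2 K" "b \<in> Z2 K" "a \<noteq> b"
  then obtain k j where kj: "a = (2*real k+1)/(2*real K)" "b = (2*real j+1)/(2*real K)" unfolding Z2_def by auto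
  have kj': "a = (real k + 1/2) / real K" "b = (real j + 1/2) / real K" using kj K by (simp_all add: field_simps)
  then have "k \<noteq> j" using K by auto
  then have "1 \<le> \<bar>real k - real j\<bar>" by linarith
  then have "1 \<le> (real k - real j)^2"
    by (metis abs_ge_self abs_le_square_iff abs_one le_trans one_le_power power_one)
  moreover have "a - b = (real k - real j) / real K" using kj K by (simp add: field_simps)
  then have "(a - b)^2 = (real k - real j)^2 / (real K)^2" by (simp add: power_divide)
  ultimately show ?thesis using K by (simp add: power_divide divide_right_mono)
qed

lemma Z02_sep: "K \<ge> 1 \<Longrightarrow> a \<in> Z0 K \<Longrightarrow> b \<in> Z2 K \<Longrightarrow> (1/(2*real K))^2 \<le> (a - b)^2"
proof -
  assume K: "K \<ge> 1" "a \<in> Z0 K" "b \<in> Z2 K"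
  then obtain k j where kj: "a = real k / real K" "b = (2*real j+1)/(2*real K)" unfolding Z0_def Z2_def by auto
  have "1 \<le> \<bar>2*real k - 2*real j - 1\<bar>"
  proof -
    have "2*k \<noteq> 2*j+1" by presburger
    then show ?thesis by linarith
  qed
  then have "1 \<le> (2*real k - 2*real j - 1)^2"
    by (metis abs_ge_self abs_le_square_iff abs_one le_trans one_le_power power_one)
  moreover have "a - b = (2*real k - 2*real j - 1) / (2*real K)" using kj K by (simp add: field_simps)
  then have "(a - b)^2 = (2*real k - 2*real j - 1)^2 / (2*real K)^2" by (simp add: power_divide)
  ultimately show ?thesis using K by (simp add: power_divide divide_right_mono)
qed




lemma PP_mem: "v \<in> PP K s \<Longrightarrow> v$t \<in> (if t \<in> s then Z2 K else Z0 K)"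
  unfolding PP_def by simp

lemma PP_mem2: "v \<in> PP K s \<Longrightarrow> t \<in> s \<Longrightarrow> v$t \<in> Z2 K"
  using PP_mem[of v K s t] by simp
lemma PP_mem0: "v \<in> PP K s \<Longrightarrow> t \<notin> s \<Longrightarrow> v$t \<in> Z0 K"
  using PP_mem[of v K s t] by simp

lemma PP_cube: "K \<ge> 1 \<Longrightarrow> PP K s \<subseteq> cube4"
proof
  fix v assume K: "K \<ge> 1" and v: "v \<in> PP K s"
  have "0 \<le> v$t \<and> v$t \<le> 1" for t
  proof (cases "t \<in> s")
    case True then show ?thesis using PP_mem2[OF v] Z2_range[OF K] by blast
  next
    case False then show ?thesis using PP_mem0[OF v] Z0_range[OF K] by blast
  qed
  then show "v \<in> cube4" unfolding cube4_def by auto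
qed
lemma PP_card: assumes K: "K \<ge> 1"
  shows "finite (PP K s) \<and> card (PP K s) = K ^ card s * (K+1) ^ (4 - card s)"
proof -
  have f: "\<And>t. finite (if t \<in> s then Z2 K else Z0 K)" using card_Z0[OF K] card_Z2[OF K] by auto
  have "(\<Prod>t\<in>UNIV. card (if t \<in> s then Z2 K else Z0 K)) = (\<Prod>t\<in>(UNIV::4 set). if t \<in> s then K else K+1)"
    using card_Z0[OF K] card_Z2[OF K] by (intro prod.cong) auto
  also have "\<dots> = K ^ card s * (K+1) ^ card (-s)"
    by (simp add: prod.If_cases Compl_eq)
  also have "\<dots> = K ^ card s * (K+1) ^ (4 - card s)" by (simp add: card_compl4)
  finally show ?thesis using card_vecset[of "\<lambda>t. if t \<in> s then Z2 K else Z0 K", OF f]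
    unfolding PP_def by simp
qed

lemma PP_disj: assumes K: "K \<ge> 1" and "s \<noteq> s'" shows "PP K s \<inter> PP K s' = {}"
proof (rule ccontr)
  assume "PP K s \<inter> PP K s' \<noteq> {}"
  then obtain v where v: "v \<in> PP K s" "v \<in> PP K s'" by blast
  obtain t where "t \<in> s \<and> t \<notin> s' \<or> t \<in> s' \<and> t \<notin> s" using assms(2) by blast
  then show False using PP_mem2[OF v(1)] PP_mem0[OF v(1)] PP_mem2[OF v(2)] PP_mem0[OF v(2)] Z0_Z2_disj[OF K] by blast
qed

lemma PP_class_dist:
  assumes K: "K \<ge> 1" and v: "v \<in> PP K s" and w: "w \<in> PP K s'"
  shows "real (card ((s - s') \<union> (s' - s))) * (1/(2*real K))^2 \<le> (dist v w)^2"
proof -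
  let ?D = "(s - s') \<union> (s' - s)"
  have "real (card ?D) * (1/(2*real K))^2 = (\<Sum>t\<in>UNIV. if t \<in> ?D then (1/(2*real K))^2 else 0)"
    by (rule sum_if_card[symmetric])
  also have "\<dots> \<le> (\<Sum>t\<in>UNIV. (v$t - w$t)^2)"
  proof (rule sum_mono)
    fix t
    show "(if t \<in> ?D then (1/(2*real K))^2 else 0) \<le> (v$t - w$t)^2"
    proof (cases "t \<in> ?D")
      case True
      then have "v$t \<in> Z0 K \<and> w$t \<in> Z2 K \<or> v$t \<in> Z2 K \<and> w$t \<in> Z0 K"
        using PP_mem2[OF v] PP_mem0[OF v] PP_mem2[OF w] PP_mem0[OF w] by blast
      then show ?thesis using Z02_sep[OF K, of "v$t" "w$t"] Z02_sep[OF K, of "w$t" "v$t"] True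
        by (auto simp: power2_commute)
    next
      case False
      then show ?thesis by (simp only: if_not_P[OF False]) simp
    qed
  qed
  finally show ?thesis by (simp add: dist_sq)
qed

lemma PP_same_dist:
  assumes K: "K \<ge> 1" and v: "v \<in> PP K s" and w: "w \<in> PP K s" and ne: "v \<noteq> w"
  shows "(1/real K)^2 \<le> (dist v w)^2"
proof -
  obtain t where t: "v$t \<noteq> w$t" using ne by (metis vec_eq_iff)
  have "(1/real K)^2 \<le> (v$t - w$t)^2"
  proof (cases "t \<in> s")
    case True
    then have "v$t \<in> Z2 K" "w$t \<in> Z2 K" using PP_mem2[OF v] PP_mem2[OF w] by blast+
    then show ?thesis using t Z2_sep[OF K] by blast
  next
    case False
    then have "v$t \<in> Z0 K" "w$t \<in> Z0 K" using PP_mem0[OF v] PP_mem0[OF w] by blast+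
    then show ?thesis using t Z0_sep[OF K] by blast
  qed
  also have "\<dots> \<le> (\<Sum>t\<in>UNIV. (v$t - w$t)^2)" by (rule member_le_sum) auto
  finally show ?thesis by (simp add: dist_sq)
qed

lemma card_two_sets: "card {s::4 set. card s = 2} = 6"
proof -
  have "card {B. B \<subseteq> (UNIV::4 set) \<and> card B = 2} = card (UNIV::4 set) choose 2"
    by (rule n_subsets) simp
  then show ?thesis by (simp add: choose42)
qed

lemma AA_card: assumes K: "K \<ge> 1" shows "finite (AA K) \<and> card (AA K) = (K+1)^4 + K^4"
proof -
  have "PP K {} \<inter> PP K UNIV = {}" by (rule PP_disj[OF K]) simp
  then show ?thesis unfolding AA_def using PP_card[OF K, of "{}"] PP_card[OF K, of UNIV]
    by (simp add: card_Un_disjoint)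
qed

lemma HH_card: assumes K: "K \<ge> 1" shows "finite (HH K) \<and> card (HH K) = 6 * K^2 * (K+1)^2"
proof -
  have "card (HH K) = (\<Sum>s\<in>{s::4 set. card s = 2}. card (PP K s))"
    unfolding HH_def
    by (rule card_UN_disjoint) (use PP_card[OF K] PP_disj[OF K] in auto)
  also have "\<dots> = (\<Sum>s\<in>{s::4 set. card s = 2}. K^2 * (K+1)^2)"
    by (rule sum.cong) (use PP_card[OF K] in auto)
  also have "\<dots> = 6 * K^2 * (K+1)^2" using card_two_sets by simp
  finally show ?thesis unfolding HH_def using PP_card[OF K] by simp
qed

lemma AA_HH_disj: assumes K: "K \<ge> 1" shows "AA K \<inter> HH K = {}"
proof -
  have "v \<notin> HH K" if v: "v \<in> AA K" for v
  proof
    assume "v \<in> HH K"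
    then obtain s where s: "card s = 2" "v \<in> PP K s" unfolding HH_def by blast
    have "s \<noteq> {}" "s \<noteq> UNIV" using s(1) by auto
    then have "PP K s \<inter> PP K {} = {}" "PP K s \<inter> PP K UNIV = {}" using PP_disj[OF K] by blast+
    then show False using v s(2) unfolding AA_def by blast
  qed
  then show ?thesis by blast
qed

lemma BB_card: assumes K: "K \<ge> 1" shows "finite (BB K) \<and> card (BB K) = (K+1)^4 + K^4 + 6 * K^2 * (K+1)^2"
  unfolding BB_def using AA_card[OF K] HH_card[OF K] AA_HH_disj[OF K] by (simp add: card_Un_disjoint)

lemma PP_sub_next: assumes K: "K \<ge> 1" shows "PP K s \<subseteq> PP (2*K) {}"
  unfolding PP_def using Z0_sub[OF K] Z2_sub[OF K] by auto

lemma BB_sub: assumes K: "K \<ge> 1" shows "AA K \<subseteq> BB K \<and> BB K \<subseteq> AA (2*K)"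
  unfolding BB_def AA_def HH_def using PP_sub_next[OF K] by blast

lemma AA_cube: "K \<ge> 1 \<Longrightarrow> AA K \<subseteq> cube4"
  unfolding AA_def using PP_cube by blast
lemma HH_cube: "K \<ge> 1 \<Longrightarrow> HH K \<subseteq> cube4"
  unfolding HH_def using PP_cube by blast




lemma coordA:
  assumes K: "K \<ge> 1" and x: "0 \<le> x" "x \<le> 1"
  shows "\<exists>a\<in>Z0 K. \<exists>b\<in>Z2 K. \<bar>x - a\<bar> + \<bar>x - b\<bar> = 1/(2*real K)"
proof -
  have Kp: "real K > 0" using K by simp
  obtain j where j: "j < K" "real j \<le> x * real K" "x * real K \<le> real j + 1"
  proof (cases "x = 1")
    case True
    then show ?thesis using that[of "K - 1"] K by (simp add: of_nat_diff)
  next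
    case False
    then have x1: "x < 1" using x by simp
    define j where "j = nat \<lfloor>x * real K\<rfloor>"
    have "0 \<le> x * real K" using x by simp
    then have jj: "real j = of_int \<lfloor>x * real K\<rfloor>" unfolding j_def by simp
    have "x * real K < real K" using x1 Kp by simp
    then have "real j < real K" using jj by linarith
    then show ?thesis using that[of j] jj by linarith
  qed
  define f where "f = x * real K - real j"
  have f: "0 \<le> f" "f \<le> 1" using j unfolding f_def by auto
  have xe: "x = (real j + f) / real K" using Kp unfolding f_def by (simp add: field_simps)
  define b where "b = (2*real j + 1)/(2*real K)"
  have bZ: "b \<in> Z2 K" unfolding b_def Z2_def using j(1) by auto
  have xb: "x - b = (f - 1/2) / real K" unfolding xe b_def using Kp by (simp add: field_simps)
  show ?thesis
  proof (cases "f \<le> 1/2")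
    case True
    define a where "a = real j / real K"
    have aZ: "a \<in> Z0 K" unfolding a_def Z0_def using j(1) by auto
    have xa: "x - a = f / real K" unfolding xe a_def using Kp by (simp add: field_simps)
    have "\<bar>x - a\<bar> + \<bar>x - b\<bar> = f / real K + (1/2 - f) / real K"
      unfolding xa xb using True f Kp by (simp add: abs_div_pos)
    also have "\<dots> = 1/(2*real K)" using Kp by (simp add: field_simps)
    finally show ?thesis using aZ bZ by blast
  next
    case False
    define a where "a = real (j+1) / real K"
    have aZ: "a \<in> Z0 K" unfolding a_def Z0_def using j(1) by (auto simp del: of_nat_Suc)
    have xa: "x - a = (f - 1) / real K" unfolding xe a_def using Kp by (simp add: field_simps)
    have "\<bar>x - a\<bar> + \<bar>x - b\<bar> = (1 - f) / real K + (f - 1/2) / real K"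
      unfolding xa xb using False f Kp by (simp add: abs_div_pos)
    also have "\<dots> = 1/(2*real K)" using Kp by (simp add: field_simps)
    finally show ?thesis using aZ bZ by blast
  qed
qed

lemma sq_sum_le: "0 \<le> (a::real) \<Longrightarrow> 0 \<le> b \<Longrightarrow> a + b = D \<Longrightarrow> a^2 + b^2 \<le> D^2"
  by (auto simp: power2_eq_square algebra_simps)

lemma sum_UNIV4_const: "(\<Sum>t\<in>(UNIV::4 set). (c::real)) = 4 * c"
  by simp

lemma coverA:
  assumes K: "K \<ge> 1" and v: "v \<in> cube4"
  shows "(\<exists>p\<in>AA K. dist v p \<le> sqrt 2/(2*real K)) \<and>
         ((\<forall>p\<in>AA K. sqrt 2/(2*real K) \<le> dist v p) \<longrightarrow> v \<in> HH K)"
proof -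
  define D where "D = 1/(2*real K)"
  have Dp: "D > 0" using K unfolding D_def by simp
  have r: "sqrt 2/(2*real K) = sqrt 2 * D" unfolding D_def by simp
  have r2: "(sqrt 2 * D)^2 = 2 * D^2" by (simp add: power_mult_distrib)
  have "\<forall>t. \<exists>ab. fst ab \<in> Z0 K \<and> snd ab \<in> Z2 K \<and> \<bar>v$t - fst ab\<bar> + \<bar>v$t - snd ab\<bar> = D"
  proof
    fix t
    have "0 \<le> v$t" "v$t \<le> 1" using v unfolding cube4_def by auto
    then show "\<exists>ab. fst ab \<in> Z0 K \<and> snd ab \<in> Z2 K \<and> \<bar>v$t - fst ab\<bar> + \<bar>v$t - snd ab\<bar> = D"
      using coordA[OF K] unfolding D_def by fastforce
  qed
  then obtain g where g: "\<And>t. fst (g t) \<in> Z0 K \<and> snd (g t) \<in> Z2 K \<and> \<bar>v$t - fst (g t)\<bar> + \<bar>v$t - snd (g t)\<bar> = D"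
    by metis
  define a where "a t = fst (g t)" for t
  define b where "b t = snd (g t)" for t
  have ab: "a t \<in> Z0 K" "b t \<in> Z2 K" "\<bar>v$t - a t\<bar> + \<bar>v$t - b t\<bar> = D" for t
    using g unfolding a_def b_def by auto
  define p where "p = (\<chi> t. a t)"
  define q where "q = (\<chi> t. b t)"
  have pA: "p \<in> AA K" unfolding AA_def PP_def p_def using ab by simp
  have qA: "q \<in> AA K" unfolding AA_def PP_def q_def using ab by simp
  define S1 where "S1 = (\<Sum>t\<in>UNIV. (v$t - a t)^2)"
  define S2 where "S2 = (\<Sum>t\<in>UNIV. (v$t - b t)^2)"
  have d1: "(dist v p)^2 = S1" unfolding S1_def p_def dist_sq by simp
  have d2: "(dist v q)^2 = S2" unfolding S2_def q_def dist_sq by simp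
  have trm: "(v$t - a t)^2 + (v$t - b t)^2 \<le> D^2" for t
    using sq_sum_le[OF abs_ge_zero abs_ge_zero ab(3)[of t]] by simp
  have "S1 + S2 = (\<Sum>t\<in>UNIV. (v$t - a t)^2 + (v$t - b t)^2)"
    unfolding S1_def S2_def by (simp add: sum.distrib)
  also have "\<dots> \<le> (\<Sum>t\<in>(UNIV::4 set). D^2)" by (rule sum_mono) (rule trm)
  also have "\<dots> = 4 * D^2" by simp
  finally have S12: "S1 + S2 \<le> 4 * D^2" .
  have part1: "\<exists>p\<in>AA K. dist v p \<le> sqrt 2/(2*real K)"
  proof (cases "S1 \<le> 2 * D^2")
    case True
    then have "(dist v p)^2 \<le> (sqrt 2 * D)^2" using d1 r2 by simp
    then have "dist v p \<le> sqrt 2 * D" by (rule power2_le_imp_le) (use Dp in simp)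
    then show ?thesis using pA r by auto
  next
    case False
    then have "S2 \<le> 2 * D^2" using S12 by simp
    then have "(dist v q)^2 \<le> (sqrt 2 * D)^2" using d2 r2 by simp
    then have "dist v q \<le> sqrt 2 * D" by (rule power2_le_imp_le) (use Dp in simp)
    then show ?thesis using qA r by auto
  qed
  have part2: "v \<in> HH K" if all: "\<forall>p\<in>AA K. sqrt 2/(2*real K) \<le> dist v p"
  proof -
    have "sqrt 2 * D \<le> dist v p" "sqrt 2 * D \<le> dist v q" using all pA qA r by auto
    then have "(sqrt 2 * D)^2 \<le> (dist v p)^2" "(sqrt 2 * D)^2 \<le> (dist v q)^2"
      using Dp by (simp_all add: power_mono)
    then have S1g: "2 * D^2 \<le> S1" and S2g: "2 * D^2 \<le> S2" using d1 d2 r2 by simp_all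
    have "(\<Sum>t\<in>UNIV. D^2 - ((v$t - a t)^2 + (v$t - b t)^2)) = 4 * D^2 - (S1 + S2)"
      unfolding S1_def S2_def by (simp add: sum_subtractf sum.distrib)
    also have "\<dots> \<le> 0" using S1g S2g by simp
    finally have "(\<Sum>t\<in>UNIV. D^2 - ((v$t - a t)^2 + (v$t - b t)^2)) = 0"
      using sum_nonneg[of UNIV "\<lambda>t. D^2 - ((v$t - a t)^2 + (v$t - b t)^2)"] trm
      by (smt (verit))
    then have eq0: "D^2 - ((v$t - a t)^2 + (v$t - b t)^2) = 0" for t
      using sum_nonneg_eq_0_iff[of UNIV "\<lambda>t. D^2 - ((v$t - a t)^2 + (v$t - b t)^2)"] trm
      by simp
    have prod0: "\<bar>v$t - a t\<bar> = 0 \<or> \<bar>v$t - b t\<bar> = 0" for t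
    proof -
      have "(\<bar>v$t - a t\<bar> + \<bar>v$t - b t\<bar>)^2 = D^2" using ab(3) by simp
      then have "2 * (\<bar>v$t - a t\<bar> * \<bar>v$t - b t\<bar>) = 0" using eq0[of t]
        by (simp add: power2_eq_square algebra_simps)
      then show ?thesis by simp
    qed
    define s where "s = {t. v$t \<in> Z2 K}"
    have vP: "v \<in> PP K s"
      unfolding PP_def
    proof (clarify)
      fix t
      show "v $ t \<in> (if t \<in> s then Z2 K else Z0 K)"
      proof (cases "t \<in> s")
        case True then show ?thesis unfolding s_def by simp
      next
        case False
        then have "v$t \<noteq> b t" using ab(2) unfolding s_def by auto
        then have "v$t = a t" using prod0[of t] by simp
        then show ?thesis using False ab(1) by simp
      qed
    qed
    have alpha: "(v$t - a t)^2 = (if t \<in> s then D^2 else 0)" for t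
    proof (cases "t \<in> s")
      case True
      then have "v$t \<noteq> a t" using ab(1)[of t] Z0_Z2_disj[OF K, of "a t"] unfolding s_def by auto
      then have "\<bar>v$t - b t\<bar> = 0" using prod0[of t] by simp
      then have "\<bar>v$t - a t\<bar> = D" using ab(3)[of t] by simp
      then show ?thesis using True by (metis power2_abs)
    next
      case False
      then have "v$t \<noteq> b t" using ab(2) unfolding s_def by auto
      then have "v$t = a t" using prod0[of t] by simp
      then show ?thesis using False by simp
    qed
    have beta: "(v$t - b t)^2 = (if t \<in> -s then D^2 else 0)" for t
    proof (cases "t \<in> s")
      case True
      then have "v$t \<noteq> a t" using ab(1)[of t] Z0_Z2_disj[OF K, of "a t"] unfolding s_def by auto
      then have "v$t = b t" using prod0[of t] by simp
      then show ?thesis using True by simp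
    next
      case False
      then have "v$t \<noteq> b t" using ab(2) unfolding s_def by auto
      then have "\<bar>v$t - a t\<bar> = 0" using prod0[of t] by simp
      then have "\<bar>v$t - b t\<bar> = D" using ab(3)[of t] by simp
      then show ?thesis using False by (metis ComplI power2_abs)
    qed
    have "S1 = real (card s) * D^2" unfolding S1_def alpha by (rule sum_if_card)
    then have c1: "2 \<le> card s" using S1g Dp by (simp add: mult_le_cancel_right)
    have "S2 = real (card (-s)) * D^2" unfolding S2_def beta by (rule sum_if_card)
    then have "2 \<le> card (-s)" using S2g Dp by (simp add: mult_le_cancel_right)
    then have "card s = 2" using c1 card_compl4[of s] by simp
    then show ?thesis using vP unfolding HH_def by blast
  qed
  show ?thesis using part1 part2 by blast
qed




lemma coordB:
  assumes M: "M \<ge> (1::nat)" and x: "0 \<le> x" "x \<le> 1"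
  shows "\<exists>r r'. r \<le> M \<and> r' \<le> M \<and> (odd r \<longleftrightarrow> even r') \<and> \<bar>x * real M - real r\<bar> \<le> 1/2 \<and>
     \<bar>x * real M - real r'\<bar> = 1 - \<bar>x * real M - real r\<bar>"
proof -
  define y where "y = x * real M"
  have y: "0 \<le> y" "y \<le> real M" using x M unfolding y_def by (auto simp: mult_le_cancel_right1)
  define r where "r = nat \<lfloor>y + 1/2\<rfloor>"
  have rr: "real r = of_int \<lfloor>y + 1/2\<rfloor>" unfolding r_def using y by simp
  have r1: "\<bar>y - real r\<bar> \<le> 1/2" using rr by linarith
  have r2: "r \<le> M" using rr y by linarith
  show ?thesis
  proof (cases "real r \<le> y")
    case True
    show ?thesis
    proof (cases "r < M")
      case True
      then show ?thesis using r1 r2 \<open>real r \<le> y\<close>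
        by (intro exI[of _ r] exI[of _ "r+1"]) (auto simp: y_def)
    next
      case False
      then have "r = M" using r2 by simp
      then have "y = real M" using True y by simp
      then show ?thesis using \<open>r = M\<close> M
        by (intro exI[of _ r] exI[of _ "r-1"]) (auto simp: y_def of_nat_diff)
    qed
  next
    case False
    then have "r \<ge> 1" using y by (cases r) auto
    then show ?thesis using r1 r2 False
      by (intro exI[of _ r] exI[of _ "r-1"]) (auto simp: y_def of_nat_diff)
  qed
qed

definition pt :: "nat \<Rightarrow> (4 \<Rightarrow> nat) \<Rightarrow> real^4" where
  "pt K c = (\<chi> t. real (c t) / (2 * real K))"

lemma pt_mem: assumes K: "K \<ge> 1" and c: "\<And>t. c t \<le> 2*K"
  shows "pt K c \<in> PP K {t. odd (c t)}"
  unfolding PP_def pt_def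
proof clarify
  fix t
  show "(\<chi> t. real (c t) / (2 * real K)) $ t \<in> (if t \<in> {t. odd (c t)} then Z2 K else Z0 K)"
  proof (cases "odd (c t)")
    case True
    then obtain j where j: "c t = 2*j+1" by (metis oddE)
    then have "j < K" using c[of t] by simp
    moreover have "real (c t) / (2 * real K) = (2*real j + 1)/(2*real K)" using j by simp
    ultimately show ?thesis using True unfolding Z2_def by auto
  next
    case False
    then obtain j where j: "c t = 2*j" by (metis evenE)
    then have "j \<le> K" using c[of t] by simp
    moreover have "real (c t) / (2 * real K) = real j / real K" using j K by simp
    ultimately show ?thesis using False unfolding Z0_def by auto
  qed
qed

lemma pt_dist: assumes K: "K \<ge> 1"
  shows "(dist v (pt K c))^2 = (\<Sum>t\<in>UNIV. (v$t * (2*real K) - real (c t))^2) / (2*real K)^2"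
proof -
  have "(v$t - real (c t) / (2 * real K))^2 = (v$t * (2*real K) - real (c t))^2 / (2*real K)^2" for t
  proof -
    have "v$t - real (c t) / (2 * real K) = (v$t * (2*real K) - real (c t)) / (2*real K)"
      using K by (simp add: field_simps)
    then show ?thesis by (simp add: power_divide)
  qed
  then show ?thesis unfolding dist_sq pt_def by (simp add: sum_divide_distrib)
qed

lemma even_card_BB: assumes K: "K \<ge> 1" and v: "v \<in> PP K s" and e: "even (card s)"
  shows "v \<in> BB K"
proof -
  have c4: "card s \<le> 4" using card_mono[of UNIV s] by simp
  have "card s = 0 \<or> card s = 2 \<or> card s = 4" using c4 e by presburger
  then consider "card s = 0" | "card s = 2" | "card s = 4" by metis
  then show ?thesis
  proof cases
    case 1 then have "s = {}" by simp
    then show ?thesis using v unfolding BB_def AA_def by blast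
  next
    case 2 then show ?thesis using v unfolding BB_def HH_def by blast
  next
    case 3 then have "card s = card (UNIV::4 set)" by simp
    then have "s = UNIV" by (metis card_subset_eq finite subset_UNIV)
    then show ?thesis using v unfolding BB_def AA_def by blast
  qed
qed

lemma half_Z2: assumes K: "K \<ge> 1" and x: "0 \<le> x" "x \<le> 1" and r: "r \<le> 2*K"
  and h: "\<bar>x * (2*real K) - real r\<bar> = 1/2"
  shows "x \<in> Z2 (2*K)"
proof -
  have Kp: "real K > 0" using K by simp
  have xb: "x * (2*real K) \<le> 2 * real K" using x Kp by simp
  show ?thesis
  proof (cases "x * (2*real K) \<ge> real r")
    case True
    then have e: "x * (2*real K) = real r + 1/2" using h by linarith
    then have "r < 2*K" using xb by linarith
    moreover have "x = (2*real r + 1)/(2*real (2*K))" using e Kp by (simp add: field_simps)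
    ultimately show ?thesis unfolding Z2_def by auto
  next
    case False
    then have e: "x * (2*real K) = real r - 1/2" using h by linarith
    moreover have "0 \<le> x * (2*real K)" using x Kp by simp
    ultimately have r1: "r \<ge> 1" by (cases r) auto
    then have "r - 1 < 2*K" using r by simp
    moreover have "x = (2*real (r-1) + 1)/(2*real (2*K))" using e Kp r1 by (simp add: field_simps of_nat_diff)
    ultimately show ?thesis unfolding Z2_def by auto
  qed
qed

lemma int_Z0: assumes K: "K \<ge> 1" and r: "r \<le> 2*K" and h: "x * (2*real K) = real r"
  shows "x \<in> Z0 (2*K)"
proof -
  have "x = real r / real (2*K)" using h K by (simp add: field_simps)
  then show ?thesis unfolding Z0_def using r by auto
qed

lemma sq_quarter: "0 \<le> (x::real) \<Longrightarrow> 1/4 - x^2 = 0 \<Longrightarrow> x = 1/2"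
proof -
  assume a: "0 \<le> x" "1/4 - x^2 = 0"
  then have "x^2 = (1/2)^2" by (simp add: power2_eq_square)
  then show ?thesis using a(1) by (simp add: power2_eq_iff_nonneg)
qed

lemma prod_zero_half: "0 \<le> (x::real) \<Longrightarrow> x \<le> 1/2 \<Longrightarrow> x * (1 - 2*x) \<le> 0 \<Longrightarrow> x = 0 \<or> x = 1/2"
proof (rule ccontr)
  assume a: "0 \<le> x" "x \<le> 1/2" "x * (1 - 2*x) \<le> 0" "\<not> (x = 0 \<or> x = 1/2)"
  then have "0 < x" "0 < 1 - 2*x" by auto
  then have "0 < x * (1 - 2*x)" by (rule mult_pos_pos)
  then show False using a(3) by simp
qed

lemma sum_remove4: "(\<Sum>t\<in>(UNIV::4 set). f t) = f i + (\<Sum>t\<in>UNIV - {i}. f t)"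
  by (simp add: sum.remove)

lemma card_rem4: "card ((UNIV::4 set) - {i}) = 3"
  by (simp add: card_Diff_singleton)

lemma coverB:
  assumes K: "K \<ge> 1" and v: "v \<in> cube4"
  shows "(\<exists>p\<in>BB K. dist v p \<le> 1/(2*real K)) \<and>
         ((\<forall>p\<in>BB K. 1/(2*real K) \<le> dist v p) \<longrightarrow> v \<in> AA (2*K))"
proof -
  define M where "M = 2*real K"
  have Mp: "M > 0" using K unfolding M_def by simp
  have vr: "0 \<le> v$t \<and> v$t \<le> 1" for t using v unfolding cube4_def by auto
  have "\<forall>t. \<exists>rr. fst rr \<le> 2*K \<and> snd rr \<le> 2*K \<and> (odd (fst rr) \<longleftrightarrow> even (snd rr)) \<and>
     \<bar>v$t * real (2*K) - real (fst rr)\<bar> \<le> 1/2 \<and>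
     \<bar>v$t * real (2*K) - real (snd rr)\<bar> = 1 - \<bar>v$t * real (2*K) - real (fst rr)\<bar>"
  proof
    fix t
    have "2*K \<ge> 1" using K by simp
    from coordB[OF this, of "v$t"] vr[of t] show "\<exists>rr. fst rr \<le> 2*K \<and> snd rr \<le> 2*K \<and> (odd (fst rr) \<longleftrightarrow> even (snd rr)) \<and>
     \<bar>v$t * real (2*K) - real (fst rr)\<bar> \<le> 1/2 \<and>
     \<bar>v$t * real (2*K) - real (snd rr)\<bar> = 1 - \<bar>v$t * real (2*K) - real (fst rr)\<bar>"
      by fastforce
  qed
  then obtain g where g: "\<And>t. fst (g t) \<le> 2*K \<and> snd (g t) \<le> 2*K \<and> (odd (fst (g t)) \<longleftrightarrow> even (snd (g t))) \<and>
     \<bar>v$t * real (2*K) - real (fst (g t))\<bar> \<le> 1/2 \<and>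
     \<bar>v$t * real (2*K) - real (snd (g t))\<bar> = 1 - \<bar>v$t * real (2*K) - real (fst (g t))\<bar>"
    by metis
  define r where "r t = fst (g t)" for t
  define r' where "r' t = snd (g t)" for t
  define d where "d t = \<bar>v$t * M - real (r t)\<bar>" for t
  have rle: "r t \<le> 2*K" "r' t \<le> 2*K" for t using g unfolding r_def r'_def by auto
  have par: "odd (r t) \<longleftrightarrow> even (r' t)" for t using g unfolding r_def r'_def by auto
  have d: "0 \<le> d t" "d t \<le> 1/2" for t using g unfolding r_def d_def M_def by auto
  have d': "\<bar>v$t * M - real (r' t)\<bar> = 1 - d t" for t using g unfolding r_def r'_def d_def M_def by auto
  have dsq: "(v$t * M - real (r t))^2 = (d t)^2" for t unfolding d_def by simp
  define s where "s = {t. odd (r t)}"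
  have rad: "(1/M)^2 = 1/M^2" by (simp add: power_divide)
  have geq: "1 \<le> S" if "1/M \<le> dist v (pt K c)" "(dist v (pt K c))^2 = S / M^2" for c S
  proof -
    have "(1/M)^2 \<le> (dist v (pt K c))^2" using that(1) Mp by (simp add: power_mono)
    then have "1/M^2 \<le> S/M^2" using that(2) rad by simp
    then show ?thesis using Mp by (simp add: divide_le_cancel)
  qed
  have leq: "dist v (pt K c) \<le> 1/M" if "(dist v (pt K c))^2 = S / M^2" "S \<le> 1" for c S
  proof -
    have "(dist v (pt K c))^2 \<le> (1/M)^2" using that Mp rad by (simp add: divide_right_mono)
    then show ?thesis by (rule power2_le_imp_le) (use Mp in simp)
  qed
  have 1: "1/(2*real K) = 1/M" unfolding M_def by simp
  show ?thesis
  proof (cases "even (card s)")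
    case True
    have pB: "pt K r \<in> BB K" using even_card_BB[OF K pt_mem[OF K rle(1)] True[unfolded s_def]] .
    have dist: "(dist v (pt K r))^2 = (\<Sum>t\<in>UNIV. (d t)^2) / M^2"
      using pt_dist[OF K, of v r] dsq unfolding M_def by simp
    have S: "(\<Sum>t\<in>UNIV. (d t)^2) \<le> 1"
    proof -
      have "(\<Sum>t\<in>UNIV. (d t)^2) \<le> (\<Sum>t\<in>(UNIV::4 set). (1/2)^2)"
        by (rule sum_mono) (use d in \<open>simp add: power_mono\<close>)
      then show ?thesis by (simp add: power2_eq_square)
    qed
    have part2: "v \<in> AA (2*K)" if all: "\<forall>p\<in>BB K. 1/(2*real K) \<le> dist v p"
    proof -
      have "1 \<le> (\<Sum>t\<in>UNIV. (d t)^2)" using geq[OF _ dist] all pB 1 by auto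
      then have "(\<Sum>t\<in>UNIV. 1/4 - (d t)^2) \<le> 0" by (simp add: sum_subtractf)
      moreover have nn: "\<forall>t\<in>UNIV. 0 \<le> 1/4 - (d t)^2"
      proof
        fix t :: 4
        have "(d t)^2 \<le> (1/2)^2" using d[of t] by (simp add: power_mono)
        then show "0 \<le> 1/4 - (d t)^2" by (simp add: power2_eq_square)
      qed
      moreover have "0 \<le> (\<Sum>t\<in>UNIV. 1/4 - (d t)^2)" by (rule sum_nonneg) (use nn in auto)
      ultimately have "(\<Sum>t\<in>UNIV. 1/4 - (d t)^2) = 0" by linarith
      then have "1/4 - (d t)^2 = 0" for t using sum_nonneg_eq_0_iff[of UNIV "\<lambda>t. 1/4 - (d t)^2"] nn by simp
      then have "d t = 1/2" for t using d[of t] sq_quarter by blast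
      then have "v$t \<in> Z2 (2*K)" for t using half_Z2[OF K _ _ rle(1)[of t]] vr[of t] unfolding d_def M_def by auto
      then have "v \<in> PP (2*K) UNIV" unfolding PP_def by simp
      then show ?thesis unfolding AA_def by blast
    qed
    show ?thesis using leq[OF dist S] pB 1 part2 by auto
  next
    case False
    obtain i where i: "\<forall>t. d t \<le> d i"
    proof -
      have "Max (range d) \<in> range d" by (rule Max_in) auto
      then obtain j where j: "Max (range d) = d j" by (metis imageE)
      have "d t \<le> Max (range d)" for t by (rule Max_ge) auto
      then show ?thesis using that[of j] j by simp
    qed
    define c where "c = r(i := r' i)"
    have cle: "c t \<le> 2*K" for t unfolding c_def using rle by auto
    have ceven: "even (card {t. odd (c t)})"
    proof (cases "odd (r i)")
      case True
      then have e: "{t. odd (c t)} = s - {i}" unfolding c_def s_def using par[of i] by (auto split: if_splits)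
      have "i \<in> s" using True unfolding s_def by simp
      then have "card (s - {i}) = card s - 1" by (simp add: card_Diff_singleton)
      moreover have "card s \<ge> 1" using \<open>i \<in> s\<close> card_gt_0_iff[of s] by (metis One_nat_def Suc_leI empty_iff finite)
      ultimately show ?thesis unfolding e using False by presburger
    next
      case F2: False
      then have e: "{t. odd (c t)} = insert i s" unfolding c_def s_def using par[of i] by (auto split: if_splits)
      have "i \<notin> s" using F2 unfolding s_def by simp
      then have "card (insert i s) = card s + 1" by simp
      then show ?thesis unfolding e using False by presburger
    qed
    have pB: "pt K c \<in> BB K" using even_card_BB[OF K pt_mem[OF K cle] ceven] .
    have csq: "(v$t * M - real (c t))^2 = (if t = i then (1 - d i)^2 else (d t)^2)" for t
    proof (cases "t = i")
      case True
      then have "(v$t * M - real (c t))^2 = \<bar>v$i * M - real (r' i)\<bar>^2" unfolding c_def by simp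
      then show ?thesis using d'[of i] True by simp
    next
      case False
      then show ?thesis unfolding c_def using dsq[of t] by simp
    qed
    have dist: "(dist v (pt K c))^2 = (\<Sum>t\<in>UNIV. (if t = i then (1 - d i)^2 else (d t)^2)) / M^2"
      using pt_dist[OF K, of v c] csq unfolding M_def by simp
    have sumeq: "(\<Sum>t\<in>UNIV. (if t = i then (1 - d i)^2 else (d t)^2)) = (1 - d i)^2 + (\<Sum>t\<in>UNIV - {i}. (d t)^2)"
    proof -
      have "(\<Sum>t\<in>UNIV - {i}. (if t = i then (1 - d i)^2 else (d t)^2)) = (\<Sum>t\<in>UNIV - {i}. (d t)^2)"
        by (rule sum.cong) auto
      then show ?thesis using sum_remove4[of "\<lambda>t. if t = i then (1 - d i)^2 else (d t)^2" i] by simp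
    qed
    have oth: "(\<Sum>t\<in>UNIV - {i}. (d t)^2) \<le> 3 * (d i)^2"
    proof -
      have "(\<Sum>t\<in>UNIV - {i}. (d t)^2) \<le> (\<Sum>t\<in>UNIV - {i}. (d i)^2)"
        by (rule sum_mono) (use d i in \<open>simp add: power_mono\<close>)
      then show ?thesis using card_rem4[of i] by simp
    qed
    have bnd: "(1 - d i)^2 + 3 * (d i)^2 = 1 - 2 * d i * (1 - 2 * d i)" by (simp add: power2_eq_square algebra_simps)
    have nn: "0 \<le> 2 * d i * (1 - 2 * d i)" using d[of i] by (intro mult_nonneg_nonneg) auto
    have S: "(\<Sum>t\<in>UNIV. (if t = i then (1 - d i)^2 else (d t)^2)) \<le> 1"
      using sumeq oth bnd nn by linarith
    have part2: "v \<in> AA (2*K)" if all: "\<forall>p\<in>BB K. 1/(2*real K) \<le> dist v p"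
    proof -
      have ge: "1 \<le> (1 - d i)^2 + (\<Sum>t\<in>UNIV - {i}. (d t)^2)" using geq[OF _ dist] all pB 1 sumeq by auto
      then have "d i * (1 - 2 * d i) \<le> 0" using oth bnd by linarith
      then have "d i = 0 \<or> d i = 1/2" using d[of i] prod_zero_half by blast
      then show ?thesis
      proof
        assume "d i = 0"
        then have "d t = 0" for t using i d[of t] by (metis order_antisym)
        then have "v$t \<in> Z0 (2*K)" for t using int_Z0[OF K rle(1)[of t]] unfolding d_def M_def by simp
        then have "v \<in> PP (2*K) {}" unfolding PP_def by simp
        then show ?thesis unfolding AA_def by blast
      next
        assume di: "d i = 1/2"
        then have "(1 - d i)^2 = 1/4" by (simp add: di power2_eq_square)
        then have "3/4 \<le> (\<Sum>t\<in>UNIV - {i}. (d t)^2)" using ge by linarith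
        then have "(\<Sum>t\<in>UNIV - {i}. 1/4 - (d t)^2) \<le> 0" using card_rem4[of i] by (simp add: sum_subtractf)
        moreover have nn: "\<forall>t\<in>UNIV - {i}. 0 \<le> 1/4 - (d t)^2"
        proof
          fix t :: 4
          have "(d t)^2 \<le> (1/2)^2" using d[of t] by (simp add: power_mono)
          then show "0 \<le> 1/4 - (d t)^2" by (simp add: power2_eq_square)
        qed
        moreover have "0 \<le> (\<Sum>t\<in>UNIV - {i}. 1/4 - (d t)^2)" by (rule sum_nonneg) (use nn in auto)
        ultimately have "(\<Sum>t\<in>UNIV - {i}. 1/4 - (d t)^2) = 0" by linarith
        then have "t \<noteq> i \<Longrightarrow> 1/4 - (d t)^2 = 0" for t using sum_nonneg_eq_0_iff[of "UNIV - {i}" "\<lambda>t. 1/4 - (d t)^2"] nn by simp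
        then have "d t = 1/2" for t
        proof (cases "t = i")
          case True then show ?thesis using di by simp
        next
          case False then show ?thesis using d[of t] sq_quarter \<open>t \<noteq> i \<Longrightarrow> 1/4 - (d t)^2 = 0\<close> by blast
        qed
        then have "v$t \<in> Z2 (2*K)" for t using half_Z2[OF K _ _ rle(1)[of t]] vr[of t] unfolding d_def M_def by auto
        then have "v \<in> PP (2*K) UNIV" unfolding PP_def by simp
        then show ?thesis unfolding AA_def by blast
      qed
    qed
    show ?thesis using leq[OF dist S] pB 1 part2 by auto
  qed
qed




lemma BB_repr: "x \<in> BB K \<Longrightarrow> \<exists>s. even (card s) \<and> x \<in> PP K s"
proof -
  assume x: "x \<in> BB K"
  have e0: "even (card ({}::4 set))" by simp
  have e4: "even (card (UNIV::4 set))" by simp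
  show ?thesis
  proof (cases "x \<in> AA K")
    case True then show ?thesis unfolding AA_def using e0 e4 by blast
  next
    case False
    then have "x \<in> HH K" using x unfolding BB_def by blast
    then obtain s where "card s = 2" "x \<in> PP K s" unfolding HH_def by blast
    then show ?thesis by (intro exI[of _ s]) simp
  qed
qed

lemma AA_repr: "x \<in> AA K \<Longrightarrow> \<exists>s. (s = {} \<or> s = UNIV) \<and> x \<in> PP K s"
  unfolding AA_def by auto

lemma symdiff_card:
  fixes s1 s2 :: "4 set"
  assumes "even (card s1)" "even (card s2)" "s1 \<noteq> s2"
  shows "2 \<le> card ((s1 - s2) \<union> (s2 - s1))"
proof -
  have c: "card ((s1 - s2) \<union> (s2 - s1)) = card (s1 - s2) + card (s2 - s1)"
    by (rule card_Un_disjoint) auto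
  have a: "card (s1 - s2) = card s1 - card (s1 \<inter> s2)" by (simp add: card_Diff_subset_Int)
  have b: "card (s2 - s1) = card s2 - card (s1 \<inter> s2)" by (simp add: card_Diff_subset_Int Int_commute)
  have a': "card (s1 \<inter> s2) \<le> card s1" "card (s1 \<inter> s2) \<le> card s2" by (simp_all add: card_mono)
  have ne: "(s1 - s2) \<union> (s2 - s1) \<noteq> {}" using assms(3) by blast
  then have "card ((s1 - s2) \<union> (s2 - s1)) \<noteq> 0" by simp
  then show ?thesis using c a b a' assms(1,2) by presburger
qed

lemma sepA: assumes K: "K \<ge> 1" and p: "p \<in> AA K" and q: "q \<in> AA K" and ne: "p \<noteq> q"
  shows "1/real K \<le> dist p q"
proof -
  obtain s1 where s1: "s1 = {} \<or> s1 = UNIV" "p \<in> PP K s1" using AA_repr[OF p] by blast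
  obtain s2 where s2: "s2 = {} \<or> s2 = UNIV" "q \<in> PP K s2" using AA_repr[OF q] by blast
  have "(1/real K)^2 \<le> (dist p q)^2"
  proof (cases "s1 = s2")
    case True
    then show ?thesis using PP_same_dist[OF K s1(2) _ ne] s2(2) by simp
  next
    case False
    then have "(s1 - s2) \<union> (s2 - s1) = UNIV" using s1(1) s2(1) by auto
    then have "real (card ((s1 - s2) \<union> (s2 - s1))) * (1/(2*real K))^2 = (1/real K)^2"
      by (simp add: power2_eq_square)
    then show ?thesis using PP_class_dist[OF K s1(2) s2(2)] by simp
  qed
  then show ?thesis by (rule power2_le_imp_le) simp
qed

lemma sepB: assumes K: "K \<ge> 1" and p: "p \<in> BB K" and q: "q \<in> BB K" and ne: "p \<noteq> q"
  shows "sqrt 2/(2*real K) \<le> dist p q"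
proof -
  obtain s1 where s1: "even (card s1)" "p \<in> PP K s1" using BB_repr[OF p] by blast
  obtain s2 where s2: "even (card s2)" "q \<in> PP K s2" using BB_repr[OF q] by blast
  have r2: "(sqrt 2/(2*real K))^2 = 2 * (1/(2*real K))^2" by (simp add: power_divide)
  have "(sqrt 2/(2*real K))^2 \<le> (dist p q)^2"
  proof (cases "s1 = s2")
    case True
    have "(sqrt 2/(2*real K))^2 \<le> (1/real K)^2" unfolding r2 using K by (simp add: power2_eq_square field_simps)
    also have "\<dots> \<le> (dist p q)^2" using True PP_same_dist[OF K s1(2) _ ne] s2(2) by simp
    finally show ?thesis .
  next
    case False
    have "2 * (1/(2*real K))^2 \<le> real (card ((s1 - s2) \<union> (s2 - s1))) * (1/(2*real K))^2"
      using symdiff_card[OF s1(1) s2(1) False] by (intro mult_right_mono) auto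
    then show ?thesis unfolding r2 using PP_class_dist[OF K s1(2) s2(2)] by linarith
  qed
  then show ?thesis by (rule power2_le_imp_le) simp
qed




lemma md_set: "{dist y (x i) | i. i \<in> {1..n}} = (\<lambda>p. dist y p) ` (x ` {1..n})"
  by auto

lemma md_le: "n \<ge> 1 \<Longrightarrow> p \<in> x ` {1..n} \<Longrightarrow> min_dist x n y \<le> dist y p"
  unfolding min_dist_def md_set by (rule Min_le) auto

lemma md_ge: "n \<ge> 1 \<Longrightarrow> (\<forall>p\<in>x ` {1..n}. r \<le> dist y p) \<Longrightarrow> r \<le> min_dist x n y"
  unfolding min_dist_def md_set by (subst Min_ge_iff) auto

lemma X_Suc: "x ` {1..Suc n} = insert (x (Suc n)) (x ` {1..n})"
  by (simp add: atLeastAtMostSuc_conv)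

lemma stage:
  assumes greedy: "\<And>n. n \<ge> 1 \<Longrightarrow> x (Suc n) \<in> cube4 \<and>
                   (\<forall>y\<in>cube4. min_dist x n y \<le> min_dist x n (x (Suc n)))"
    and fin: "finite S" "finite H" and r: "r > 0" and Hc: "H \<subseteq> cube4"
    and cover: "\<forall>v\<in>cube4. (\<forall>p\<in>S. r \<le> dist v p) \<longrightarrow> v \<in> H"
    and sep: "\<forall>h\<in>H. \<forall>p\<in>S \<union> H. p \<noteq> h \<longrightarrow> r \<le> dist h p"
    and start: "x ` {1..n0} = S" "card S = n0" "n0 \<ge> 1"
  shows "k \<le> card (S \<union> H) - n0 \<Longrightarrow> S \<subseteq> x ` {1..n0+k} \<and> x ` {1..n0+k} \<subseteq> S \<union> H \<and> card (x ` {1..n0+k}) = n0 + k"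
proof (induction k)
  case 0
  then show ?case using start by simp
next
  case (Suc k)
  define n where "n = n0 + k"
  have n1: "n \<ge> 1" using start unfolding n_def by simp
  have IH: "S \<subseteq> x ` {1..n}" "x ` {1..n} \<subseteq> S \<union> H" "card (x ` {1..n}) = n"
    using Suc unfolding n_def by auto
  have finU: "finite (S \<union> H)" using fin by simp
  have lt: "n < card (S \<union> H)" using Suc.prems unfolding n_def by simp
  obtain h where h: "h \<in> S \<union> H" "h \<notin> x ` {1..n}"
  proof (rule ccontr)
    assume "\<not> thesis"
    then have "S \<union> H \<subseteq> x ` {1..n}" using that by blast
    then have "card (S \<union> H) \<le> n" using IH(3) card_mono[of "x ` {1..n}"] by simp
    then show False using lt by simp
  qed
  have hH: "h \<in> H" using h IH(1) by blast
  have hc: "h \<in> cube4" using hH Hc by blast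
  have "\<forall>p\<in>x ` {1..n}. r \<le> dist h p"
  proof
    fix p assume p: "p \<in> x ` {1..n}"
    then have "p \<in> S \<union> H" "p \<noteq> h" using IH(2) h(2) by auto
    then show "r \<le> dist h p" using sep hH by blast
  qed
  then have "r \<le> min_dist x n h" by (rule md_ge[OF n1])
  moreover have g: "x (Suc n) \<in> cube4" "min_dist x n h \<le> min_dist x n (x (Suc n))"
    using greedy[OF n1] hc by auto
  ultimately have ry: "r \<le> min_dist x n (x (Suc n))" by simp
  have "\<forall>p\<in>S. r \<le> dist (x (Suc n)) p"
  proof
    fix p assume "p \<in> S"
    then have "p \<in> x ` {1..n}" using IH(1) by blast
    then have "min_dist x n (x (Suc n)) \<le> dist (x (Suc n)) p" by (rule md_le[OF n1])
    then show "r \<le> dist (x (Suc n)) p" using ry by simp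
  qed
  then have yH: "x (Suc n) \<in> H" using cover g(1) by blast
  have ynot: "x (Suc n) \<notin> x ` {1..n}"
  proof
    assume "x (Suc n) \<in> x ` {1..n}"
    then have "min_dist x n (x (Suc n)) \<le> dist (x (Suc n)) (x (Suc n))" by (rule md_le[OF n1])
    then have "min_dist x n (x (Suc n)) \<le> 0" by simp
    then show False using ry r by simp
  qed
  have eq: "x ` {1..n0 + Suc k} = insert (x (Suc n)) (x ` {1..n})" unfolding n_def
    using X_Suc[of x "n0+k"] by simp
  have "finite (x ` {1..n})" by simp
  then have "card (insert (x (Suc n)) (x ` {1..n})) = Suc n" using ynot IH(3) by simp
  moreover have "S \<subseteq> insert (x (Suc n)) (x ` {1..n})" using IH(1) by blast
  moreover have "insert (x (Suc n)) (x ` {1..n}) \<subseteq> S \<union> H" using IH(2) yH by blast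
  ultimately show ?case unfolding eq n_def by simp
qed

lemma CR_eq:
  assumes up: "\<forall>v\<in>cube4. min_dist x n v \<le> r" and h: "h \<in> cube4" "r \<le> min_dist x n h"
  shows "CR x n = r"
proof -
  have ne: "cube4 \<noteq> {}" using h by blast
  have "CR x n \<le> r" unfolding CR_def by (rule cSUP_least[OF ne]) (use up in auto)
  moreover have bdd: "bdd_above ((\<lambda>y. min_dist x n y) ` cube4)"
    using up by (auto simp: bdd_above_def)
  have "r \<le> CR x n" unfolding CR_def
    using cSUP_upper2[of "\<lambda>y. min_dist x n y" cube4 h r] bdd h by simp
  ultimately show ?thesis by simp
qed

lemma SR_eq:
  assumes card: "card (x ` {1..n}) = n"
    and lb: "\<forall>p\<in>x ` {1..n}. \<forall>q\<in>x ` {1..n}. p \<noteq> q \<longrightarrow> s \<le> dist p q"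
    and w: "p \<in> x ` {1..n}" "q \<in> x ` {1..n}" "p \<noteq> q" "dist p q = s"
  shows "SR x n = s / 2"
proof -
  have inj: "inj_on x {1..n}" using card by (simp add: inj_on_iff_eq_card)
  let ?A = "{dist (x i) (x j) | i j. i \<in> {1..n} \<and> j \<in> {1..n} \<and> i \<noteq> j}"
  have fin: "finite ?A"
  proof -
    have "?A \<subseteq> (\<lambda>(i,j). dist (x i) (x j)) ` ({1..n} \<times> {1..n})" by auto
    then show ?thesis by (rule finite_subset) simp
  qed
  have "Min ?A = s"
  proof (rule Min_eqI[OF fin])
    fix y assume "y \<in> ?A"
    then obtain i j where ij: "y = dist (x i) (x j)" "i \<in> {1..n}" "j \<in> {1..n}" "i \<noteq> j" by blast
    then have "x i \<noteq> x j" using inj by (metis inj_on_contraD)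
    then show "s \<le> y" using lb ij by blast
  next
    obtain i j where "p = x i" "q = x j" "i \<in> {1..n}" "j \<in> {1..n}" using w by blast
    then show "s \<in> ?A" using w by blast
  qed
  then show ?thesis unfolding SR_def by simp
qed




lemma nm_eq: "n_m m = (2^m+1)^4 + (2^m)^4"
  unfolding n_m_def by (simp add: power_mult[symmetric] mult.commute)

lemma lm_eq: "l_m m = 6 * (2^m)^2 * (2^m+1)^2"
  unfolding l_m_def by (simp add: power_mult[symmetric] mult.commute)

lemma nm_Suc: "n_m (Suc m) = (2*2^m+1)^4 + (2*2^m)^4"
  using nm_eq[of "Suc m"] by simp

lemma K_ge: "(2::nat)^m \<ge> 1" by simp

lemma card_AA_m: "card (AA (2^m)) = n_m m" using AA_card[OF K_ge[of m]] nm_eq by simp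
lemma card_BB_m: "card (BB (2^m)) = n_m m + l_m m" using BB_card[OF K_ge[of m]] nm_eq lm_eq by simp
lemma card_AA_Suc: "card (AA (2*2^m)) = n_m (Suc m)"
  using AA_card[of "2*2^m"] nm_Suc by simp

lemma fin_AA: "K \<ge> 1 \<Longrightarrow> finite (AA K)" using AA_card by blast
lemma fin_BB: "K \<ge> 1 \<Longrightarrow> finite (BB K)" using BB_card by blast
lemma fin_HH: "K \<ge> 1 \<Longrightarrow> finite (HH K)" using HH_card by blast

lemma eq_from_card: "finite B \<Longrightarrow> A \<subseteq> B \<Longrightarrow> card A = card B \<Longrightarrow> A = B"
  by (simp add: card_subset_eq)

context
  fixes x :: "nat \<Rightarrow> real^4"
  assumes greedy: "\<And>n. n \<ge> 1 \<Longrightarrow> x (Suc n) \<in> cube4 \<and>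
                   (\<forall>y\<in>cube4. min_dist x n y \<le> min_dist x n (x (Suc n)))"
begin

lemma stage1:
  assumes K: "K = (2::nat)^m" and st: "x ` {1..n_m m} = AA K"
  shows "k \<le> l_m m \<Longrightarrow> AA K \<subseteq> x ` {1..n_m m + k} \<and> x ` {1..n_m m + k} \<subseteq> BB K \<and> card (x ` {1..n_m m + k}) = n_m m + k"
proof -
  assume k: "k \<le> l_m m"
  have K1: "K \<ge> 1" using K by simp
  have r: "sqrt 2/(2*real K) > 0" using K1 by simp
  have U: "AA K \<union> HH K = BB K" unfolding BB_def by simp
  have cover: "\<forall>v\<in>cube4. (\<forall>p\<in>AA K. sqrt 2/(2*real K) \<le> dist v p) \<longrightarrow> v \<in> HH K"
    using coverA[OF K1] by blast
  have sep: "\<forall>h\<in>HH K. \<forall>p\<in>AA K \<union> HH K. p \<noteq> h \<longrightarrow> sqrt 2/(2*real K) \<le> dist h p"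
    using sepB[OF K1] unfolding U by (auto simp: BB_def)
  have n1: "n_m m \<ge> 1" unfolding n_m_def by (simp add: Suc_le_eq)
  have cA: "card (AA K) = n_m m" using card_AA_m K by simp
  have kk: "k \<le> card (AA K \<union> HH K) - n_m m" using k card_BB_m[of m] K U by simp
  from stage[OF greedy fin_AA[OF K1] fin_HH[OF K1] r HH_cube[OF K1] cover sep st cA n1 kk]
  show ?thesis unfolding U .
qed

lemma stage1_end:
  assumes K: "K = (2::nat)^m" and st: "x ` {1..n_m m} = AA K"
  shows "x ` {1..n_m m + l_m m} = BB K"
proof -
  have K1: "K \<ge> 1" using K by simp
  have "x ` {1..n_m m + l_m m} \<subseteq> BB K" "card (x ` {1..n_m m + l_m m}) = card (BB K)"
    using stage1[OF K st, of "l_m m"] card_BB_m[of m] K by auto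
  then show ?thesis using eq_from_card[OF fin_BB[OF K1]] by blast
qed

lemma stage2:
  assumes K: "K = (2::nat)^m" and st: "x ` {1..n_m m} = AA K"
  shows "k \<le> n_m (Suc m) - (n_m m + l_m m) \<Longrightarrow> BB K \<subseteq> x ` {1..n_m m + l_m m + k} \<and> x ` {1..n_m m + l_m m + k} \<subseteq> AA (2*K) \<and> card (x ` {1..n_m m + l_m m + k}) = n_m m + l_m m + k"
proof -
  assume k: "k \<le> n_m (Suc m) - (n_m m + l_m m)"
  have K1: "K \<ge> 1" using K by simp
  have K2: "2*K \<ge> 1" using K by simp
  have r: "1/(2*real K) > 0" using K1 by simp
  have sub: "BB K \<subseteq> AA (2*K)" using BB_sub[OF K1] by blast
  have U: "BB K \<union> (AA (2*K) - BB K) = AA (2*K)" using sub by blast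
  have cover: "\<forall>v\<in>cube4. (\<forall>p\<in>BB K. 1/(2*real K) \<le> dist v p) \<longrightarrow> v \<in> AA (2*K) - BB K"
  proof (intro ballI impI)
    fix v assume v: "v \<in> cube4" and all: "\<forall>p\<in>BB K. 1/(2*real K) \<le> dist v p"
    have "v \<in> AA (2*K)" using coverB[OF K1 v] all by blast
    moreover have "v \<notin> BB K"
    proof
      assume "v \<in> BB K"
      then have "1/(2*real K) \<le> dist v v" using all by blast
      then show False using r by simp
    qed
    ultimately show "v \<in> AA (2*K) - BB K" by blast
  qed
  have sep: "\<forall>h\<in>AA (2*K) - BB K. \<forall>p\<in>BB K \<union> (AA (2*K) - BB K). p \<noteq> h \<longrightarrow> 1/(2*real K) \<le> dist h p"
    unfolding U using sepA[OF K2] by simp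
  have n1: "n_m m + l_m m \<ge> 1" unfolding n_m_def by (simp add: Suc_le_eq)
  have cB: "card (BB K) = n_m m + l_m m" using card_BB_m K by simp
  have Hc: "AA (2*K) - BB K \<subseteq> cube4" using AA_cube[OF K2] by blast
  have kk: "k \<le> card (BB K \<union> (AA (2*K) - BB K)) - (n_m m + l_m m)" using k card_AA_Suc[of m] K U by simp
  have st2: "x ` {1..n_m m + l_m m} = BB K" by (rule stage1_end[OF K st])
  from stage[OF greedy fin_BB[OF K1] _ r Hc cover sep st2 cB n1 kk] fin_AA[OF K2]
  show ?thesis unfolding U by simp
qed

lemma stage2_end:
  assumes K: "K = (2::nat)^m" and st: "x ` {1..n_m m} = AA K"
  shows "x ` {1..n_m (Suc m)} = AA (2*K)"
proof -
  have K2: "2*K \<ge> 1" using K by simp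
  have K1: "K \<ge> 1" using K by simp
  have "card (BB K) \<le> card (AA (2*K))" using BB_sub[OF K1] fin_AA[OF K2] by (simp add: card_mono)
  then have le: "n_m m + l_m m \<le> n_m (Suc m)" using card_BB_m[of m] card_AA_Suc[of m] K by simp
  have e: "n_m m + l_m m + (n_m (Suc m) - (n_m m + l_m m)) = n_m (Suc m)" using le by simp
  have "x ` {1..n_m (Suc m)} \<subseteq> AA (2*K)" "card (x ` {1..n_m (Suc m)}) = card (AA (2*K))"
    using stage2[OF K st, of "n_m (Suc m) - (n_m m + l_m m)"] card_AA_Suc[of m] K unfolding e by auto
  then show ?thesis using eq_from_card[OF fin_AA[OF K2]] by blast
qed

end



lemma AA_lt_BB: assumes K: "K \<ge> 1" shows "card (AA K) < card (BB K)"
proof -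
  have "card (HH K) > 0" using HH_card[OF K] K by simp
  then obtain h where h: "h \<in> HH K" by (metis card_gt_0_iff ex_in_conv)
  then have "h \<notin> AA K" using AA_HH_disj[OF K] by blast
  then have "AA K \<subset> BB K" using h unfolding BB_def by blast
  then show ?thesis using fin_BB[OF K] by (simp add: psubset_card_mono)
qed

lemma BB_lt_AA2: assumes K: "K \<ge> 1" shows "card (BB K) < card (AA (2*K))"
proof -
  have K2: "2*K \<ge> 1" using K by simp
  have "card (PP (2*K) UNIV) > 0" using PP_card[OF K2, of UNIV] K by simp
  then obtain h where h: "h \<in> PP (2*K) UNIV" by (metis card_gt_0_iff ex_in_conv)
  have "BB K \<subseteq> PP (2*K) {}" using PP_sub_next[OF K] unfolding BB_def AA_def HH_def by blast
  moreover have "PP (2*K) {} \<inter> PP (2*K) UNIV = {}" by (rule PP_disj[OF K2]) simp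
  ultimately have "h \<notin> BB K" using h by blast
  moreover have "h \<in> AA (2*K)" using h unfolding AA_def by blast
  ultimately have "BB K \<subset> AA (2*K)" using BB_sub[OF K] by blast
  then show ?thesis using fin_AA[OF K2] by (simp add: psubset_card_mono)
qed

lemma CR1:
  assumes K: "K \<ge> 1" and n: "n \<ge> 1" and s: "AA K \<subseteq> x ` {1..n}" "x ` {1..n} \<subseteq> BB K"
    and c: "card (x ` {1..n}) < card (BB K)"
  shows "CR x n = sqrt 2/(2*real K)"
proof -
  have up: "\<forall>v\<in>cube4. min_dist x n v \<le> sqrt 2/(2*real K)"
  proof
    fix v assume v: "v \<in> cube4"
    obtain p where p: "p \<in> AA K" "dist v p \<le> sqrt 2/(2*real K)" using coverA[OF K v] by blast
    have "min_dist x n v \<le> dist v p" using md_le[OF n] p(1) s(1) by blast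
    then show "min_dist x n v \<le> sqrt 2/(2*real K)" using p(2) by simp
  qed
  obtain h where h: "h \<in> BB K" "h \<notin> x ` {1..n}"
  proof (rule ccontr)
    assume "\<not> thesis"
    then have "BB K \<subseteq> x ` {1..n}" using that by blast
    then have "card (BB K) \<le> card (x ` {1..n})" by (simp add: card_mono)
    then show False using c by simp
  qed
  have "h \<in> HH K" using h s(1) unfolding BB_def by blast
  then have hc: "h \<in> cube4" using HH_cube[OF K] by blast
  have "\<forall>p\<in>x ` {1..n}. sqrt 2/(2*real K) \<le> dist h p"
  proof
    fix p assume p: "p \<in> x ` {1..n}"
    then have "p \<in> BB K" "p \<noteq> h" using s(2) h(2) by auto
    then show "sqrt 2/(2*real K) \<le> dist h p" using sepB[OF K h(1)] by simp
  qed
  then have hm: "sqrt 2/(2*real K) \<le> min_dist x n h" by (rule md_ge[OF n])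
  show ?thesis by (rule CR_eq[OF up hc hm])
qed

lemma SR1:
  assumes K: "K \<ge> 1" and s: "AA K \<subseteq> x ` {1..n}" "x ` {1..n} \<subseteq> BB K"
    and cn: "card (x ` {1..n}) = n" and c: "card (AA K) < card (x ` {1..n})"
  shows "SR x n = sqrt 2/(2*real K) / 2"
proof -
  obtain h where h: "h \<in> x ` {1..n}" "h \<notin> AA K"
  proof (rule ccontr)
    assume "\<not> thesis"
    then have "x ` {1..n} \<subseteq> AA K" using that by blast
    then have "card (x ` {1..n}) \<le> card (AA K)" using fin_AA[OF K] by (simp add: card_mono)
    then show False using c by simp
  qed
  have hB: "h \<in> BB K" using h s(2) by blast
  have "h \<in> HH K" using hB h(2) unfolding BB_def by blast
  then have hc: "h \<in> cube4" using HH_cube[OF K] by blast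
  obtain p where p: "p \<in> AA K" "dist h p \<le> sqrt 2/(2*real K)" using coverA[OF K hc] by blast
  have pB: "p \<in> BB K" using p(1) unfolding BB_def by blast
  have ne: "h \<noteq> p" using p(1) h(2) by blast
  have "sqrt 2/(2*real K) \<le> dist h p" using sepB[OF K hB pB ne] .
  then have d: "dist h p = sqrt 2/(2*real K)" using p(2) by simp
  show ?thesis
  proof (rule SR_eq[OF cn _ h(1) _ ne d])
    show "p \<in> x ` {1..n}" using p(1) s(1) by blast
    show "\<forall>p\<in>x ` {1..n}. \<forall>q\<in>x ` {1..n}. p \<noteq> q \<longrightarrow> sqrt 2/(2*real K) \<le> dist p q"
      using sepB[OF K] s(2) by blast
  qed
qed

lemma CR2:
  assumes K: "K \<ge> 1" and n: "n \<ge> 1" and s: "BB K \<subseteq> x ` {1..n}" "x ` {1..n} \<subseteq> AA (2*K)"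
    and c: "card (x ` {1..n}) < card (AA (2*K))"
  shows "CR x n = 1/(2*real K)"
proof -
  have K2: "2*K \<ge> 1" using K by simp
  have up: "\<forall>v\<in>cube4. min_dist x n v \<le> 1/(2*real K)"
  proof
    fix v assume v: "v \<in> cube4"
    obtain p where p: "p \<in> BB K" "dist v p \<le> 1/(2*real K)" using coverB[OF K v] by blast
    have "min_dist x n v \<le> dist v p" using md_le[OF n] p(1) s(1) by blast
    then show "min_dist x n v \<le> 1/(2*real K)" using p(2) by simp
  qed
  obtain h where h: "h \<in> AA (2*K)" "h \<notin> x ` {1..n}"
  proof (rule ccontr)
    assume "\<not> thesis"
    then have "AA (2*K) \<subseteq> x ` {1..n}" using that by blast
    then have "card (AA (2*K)) \<le> card (x ` {1..n})" by (simp add: card_mono)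
    then show False using c by simp
  qed
  have hc: "h \<in> cube4" using h(1) AA_cube[OF K2] by blast
  have "\<forall>p\<in>x ` {1..n}. 1/(2*real K) \<le> dist h p"
  proof
    fix p assume p: "p \<in> x ` {1..n}"
    then have "p \<in> AA (2*K)" "h \<noteq> p" using s(2) h(2) by auto
    then show "1/(2*real K) \<le> dist h p" using sepA[OF K2 h(1)] by simp
  qed
  then have hm: "1/(2*real K) \<le> min_dist x n h" by (rule md_ge[OF n])
  show ?thesis by (rule CR_eq[OF up hc hm])
qed

lemma SR2:
  assumes K: "K \<ge> 1" and s: "BB K \<subseteq> x ` {1..n}" "x ` {1..n} \<subseteq> AA (2*K)"
    and cn: "card (x ` {1..n}) = n" and c: "card (BB K) < card (x ` {1..n})"
  shows "SR x n = 1/(2*real K) / 2"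
proof -
  have K2: "2*K \<ge> 1" using K by simp
  obtain h where h: "h \<in> x ` {1..n}" "h \<notin> BB K"
  proof (rule ccontr)
    assume "\<not> thesis"
    then have "x ` {1..n} \<subseteq> BB K" using that by blast
    then have "card (x ` {1..n}) \<le> card (BB K)" using fin_BB[OF K] by (simp add: card_mono)
    then show False using c by simp
  qed
  have hA: "h \<in> AA (2*K)" using h s(2) by blast
  then have hc: "h \<in> cube4" using AA_cube[OF K2] by blast
  obtain p where p: "p \<in> BB K" "dist h p \<le> 1/(2*real K)" using coverB[OF K hc] by blast
  have pA: "p \<in> AA (2*K)" using p(1) BB_sub[OF K] by blast
  have ne: "h \<noteq> p" using p(1) h(2) by blast
  have "1/(2*real K) \<le> dist h p" using sepA[OF K2 hA pA ne] by simp
  then have d: "dist h p = 1/(2*real K)" using p(2) by simp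
  show ?thesis
  proof (rule SR_eq[OF cn _ h(1) _ ne d])
    show "p \<in> x ` {1..n}" using p(1) s(1) by blast
    show "\<forall>p\<in>x ` {1..n}. \<forall>q\<in>x ` {1..n}. p \<noteq> q \<longrightarrow> 1/(2*real K) \<le> dist p q"
      using sepA[OF K2] s(2) by simp blast
  qed
qed

lemma SR0:
  assumes K: "K \<ge> 1" and s: "x ` {1..n} = AA K" and cn: "card (x ` {1..n}) = n"
  shows "SR x n = 1/real K / 2"
proof -
  define p :: "real^4" where "p = (\<chi> t. 0)"
  define q :: "real^4" where "q = (\<chi> t. if t = 0 then 1/real K else 0)"
  have z0: "0 \<in> Z0 K" unfolding Z0_def by force
  have z1: "1/real K \<in> Z0 K" unfolding Z0_def using K by force
  have pA: "p \<in> AA K" unfolding AA_def PP_def p_def using z0 by simp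
  have qA: "q \<in> AA K" unfolding AA_def PP_def q_def using z0 z1 by simp
  have ne: "p \<noteq> q" unfolding p_def q_def using K by (auto simp: vec_eq_iff)
  have tt: "(p$t - q$t)^2 = (if t = 0 then (1/real K)^2 else 0)" for t by (simp add: p_def q_def)
  have "(dist p q)^2 = (1/real K)^2"
    unfolding dist_sq tt by simp
  then have d: "dist p q = 1/real K" by (simp add: power2_eq_iff_nonneg)
  show ?thesis
  proof (rule SR_eq[OF cn _ _ _ ne d])
    show "p \<in> x ` {1..n}" "q \<in> x ` {1..n}" using pA qA s by auto
    show "\<forall>p\<in>x ` {1..n}. \<forall>q\<in>x ` {1..n}. p \<noteq> q \<longrightarrow> 1/real K \<le> dist p q"
      using sepA[OF K] s by simp
  qed
qed




lemma ar1: "(k::real) > 0 \<Longrightarrow> sqrt 2/(2*k)/2 = 1/k/(2 * sqrt 2)"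
proof -
  assume k: "k > 0"
  have s: "sqrt 2 * sqrt 2 = (2::real)" by simp
  show ?thesis using k by (simp add: field_simps s)
qed

lemma ar2: "(k::real) > 0 \<Longrightarrow> (1/(2*k)) / (sqrt 2/(2*k)/2) = sqrt 2"
proof -
  assume k: "k > 0"
  have s: "sqrt 2 * sqrt 2 = (2::real)" by simp
  show ?thesis using k by (simp add: field_simps s)
qed

lemma quarter_id: "1/4 - (a - 1/2)^2 = a * (1 - (a::real))"
  by (simp add: power2_eq_square algebra_simps)

lemma abs_half: "\<bar>a - 1/2\<bar> = 1/2 \<Longrightarrow> a = 0 \<or> a = (1::real)"
  by (cases "a \<le> 1/2") (simp_all add: abs_if split: if_splits)

lemma Z2_one: "Z2 1 = {1/2}"
  unfolding Z2_def by (simp add: lessThan_Suc)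

definition cen :: "real^4" where "cen = (\<chi> i. 1/2)"

lemma PP1_UNIV: "PP 1 UNIV = {cen}"
proof
  show "PP 1 UNIV \<subseteq> {cen}"
  proof
    fix v assume "v \<in> PP 1 UNIV"
    then have "v$t = 1/2" for t using PP_mem2[of v 1 UNIV t] Z2_one by simp
    then show "v \<in> {cen}" unfolding cen_def by (simp add: vec_eq_iff)
  qed
  show "{cen} \<subseteq> PP 1 UNIV" unfolding PP_def cen_def Z2_one by simp
qed

lemma center_cover: assumes v: "v \<in> cube4" and d: "1 \<le> dist v cen" shows "v \<in> PP 1 {}"
proof -
  have vr: "0 \<le> v$t \<and> v$t \<le> 1" for t using v unfolding cube4_def by auto
  have b: "\<bar>v$t - 1/2\<bar> \<le> 1/2" for t using vr[of t] by arith
  have nn: "0 \<le> 1/4 - (v$t - 1/2)^2" for t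
  proof -
    have e: "1/4 - (v$t - 1/2)^2 = v$t * (1 - v$t)" by (rule quarter_id)
    have "0 \<le> v$t * (1 - v$t)" using vr[of t] by (intro mult_nonneg_nonneg) auto
    then show ?thesis unfolding e .
  qed
  have "1 \<le> (dist v cen)^2" using d by (simp add: one_le_power)
  then have "1 \<le> (\<Sum>t\<in>UNIV. (v$t - 1/2)^2)" unfolding dist_sq cen_def by simp
  then have "(\<Sum>t\<in>UNIV. 1/4 - (v$t - 1/2)^2) \<le> 0" by (simp add: sum_subtractf)
  moreover have "0 \<le> (\<Sum>t\<in>UNIV. 1/4 - (v$t - 1/2)^2)" by (rule sum_nonneg) (use nn in auto)
  ultimately have "(\<Sum>t\<in>UNIV. 1/4 - (v$t - 1/2)^2) = 0" by linarith
  then have z: "1/4 - (v$t - 1/2)^2 = 0" for t using sum_nonneg_eq_0_iff[of UNIV "\<lambda>t. 1/4 - (v$t - 1/2)^2"] nn by simp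
  have "v$t \<in> Z0 1" for t
  proof -
    have "1/4 - \<bar>v$t - 1/2\<bar>^2 = 0" using z[of t] by simp
    then have "\<bar>v$t - 1/2\<bar> = 1/2" by (rule sq_quarter[OF abs_ge_zero])
    then have "v$t = 0 \<or> v$t = 1" by (rule abs_half)
    then have "v$t = real 0 / real 1 \<or> v$t = real 1 / real 1" by simp
    then show ?thesis unfolding Z0_def by fastforce
  qed
  then show ?thesis unfolding PP_def by simp
qed

context
  fixes x :: "nat \<Rightarrow> real^4"
  assumes x1: "x 1 = (\<chi> i. 1/2)"
    and greedy: "\<And>n. n \<ge> 1 \<Longrightarrow> x (Suc n) \<in> cube4 \<and>
                   (\<forall>y\<in>cube4. min_dist x n y \<le> min_dist x n (x (Suc n)))"
begin

lemma base_level: "x ` {1..n_m 0} = AA (2^0)"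
proof -
  have U: "{cen} \<union> PP 1 {} = AA 1" unfolding AA_def PP1_UNIV by blast
  have n17: "n_m 0 = 17" by (simp add: n_m_def numeral_eq_Suc)
  have cA: "card (AA 1) = 17" using card_AA_m[of 0] unfolding n17 by simp
  have st: "x ` {1..1} = {cen}" using x1 unfolding cen_def by simp
  have cover: "\<forall>v\<in>cube4. (\<forall>p\<in>{cen}. 1 \<le> dist v p) \<longrightarrow> v \<in> PP 1 {}"
    using center_cover by blast
  have sep: "\<forall>h\<in>PP 1 {}. \<forall>p\<in>{cen} \<union> PP 1 {}. p \<noteq> h \<longrightarrow> 1 \<le> dist h p"
  proof (intro ballI impI)
    fix h p assume h: "h \<in> PP 1 {}" and p: "p \<in> {cen} \<union> PP 1 {}" and ne: "p \<noteq> h"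
    have "h \<in> AA 1" "p \<in> AA 1" using h p U by auto
    then show "1 \<le> dist h p" using sepA[of 1 h p] ne by auto
  qed
  have fin: "finite (PP 1 {})" using PP_card[of 1] by simp
  have kk: "16 \<le> card ({cen} \<union> PP 1 {}) - 1" unfolding U cA by simp
  from stage[OF greedy _ fin _ PP_cube[of 1] cover sep st _ _ kk]
  have "x ` {1..17} \<subseteq> AA 1" "card (x ` {1..17}) = card (AA 1)" unfolding U cA by auto
  then have "x ` {1..17} = AA 1" using eq_from_card[OF fin_AA[of 1]] by simp
  then show ?thesis using n17 by simp
qed

lemma level: "x ` {1..n_m m} = AA (2^m)"
proof (induction m)
  case 0 then show ?case by (rule base_level)
next
  case (Suc m)
  from stage2_end[OF greedy refl Suc.IH] show ?case by simp
qed

end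

theorem theorem4:
  fixes x :: "nat \<Rightarrow> real^4"
  assumes x1: "x 1 = (\<chi> i. 1/2)"
    and greedy: "\<And>n. n \<ge> 1 \<Longrightarrow> x (Suc n) \<in> cube4 \<and>
                   (\<forall>y\<in>cube4. min_dist x n y \<le> min_dist x n (x (Suc n)))"
  shows "(\<forall>m n. n = n_m m \<longrightarrow>
            SR x n = gamma_m m / 2 \<and> CR x n = gamma_m m * sqrt 2 / 2 \<and> MR x n = sqrt 2)
       \<and> (\<forall>m n. n_m m + 1 \<le> n \<and> n \<le> n_m m + l_m m - 1 \<longrightarrow>
            SR x n = gamma_m m / (2 * sqrt 2) \<and> CR x n = gamma_m m * sqrt 2 / 2 \<and> MR x n = 2)
       \<and> (\<forall>m n. n = n_m m + l_m m \<longrightarrow>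
            SR x n = gamma_m m / (2 * sqrt 2) \<and> CR x n = gamma_m m / 2 \<and> MR x n = sqrt 2)
       \<and> (\<forall>m n. n_m m + l_m m + 1 \<le> n \<and> n \<le> n_m (Suc m) - 1 \<longrightarrow>
            SR x n = gamma_m m / 4 \<and> CR x n = gamma_m m / 2 \<and> MR x n = 2)"
proof -
  have lev: "\<And>m. x ` {1..n_m m} = AA (2^m)" using level[OF x1 greedy] .
  have g: "gamma_m m = 1 / real (2^m)" for m unfolding gamma_m_def by simp
  have kp: "real ((2::nat)^m) > 0" for m by simp
  have n1: "n_m m \<ge> 1" for m unfolding n_m_def by (simp add: Suc_le_eq)
  have H1: "\<forall>m n. n = n_m m \<longrightarrow> SR x n = gamma_m m / 2 \<and> CR x n = gamma_m m * sqrt 2 / 2 \<and> MR x n = sqrt 2"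
  proof (intro allI impI)
    fix m n assume n: "n = n_m m"
    define K where "K = (2::nat)^m"
    have K: "K \<ge> 1" unfolding K_def by simp
    have X: "x ` {1..n} = AA K" using lev n unfolding K_def by simp
    have cX: "card (x ` {1..n}) = n" using X card_AA_m n unfolding K_def by simp
    have sr: "SR x n = 1/real K/2" by (rule SR0[OF K X cX])
    have cr: "CR x n = sqrt 2/(2*real K)"
      by (rule CR1[OF K]) (use n1 n X BB_sub[OF K] AA_lt_BB[OF K] in auto)
    have kpos: "real K > 0" using K by simp
    show "SR x n = gamma_m m / 2 \<and> CR x n = gamma_m m * sqrt 2 / 2 \<and> MR x n = sqrt 2"
      unfolding MR_def sr cr g K_def[symmetric] using kpos by (simp add: field_simps)
  qed
  have H2: "\<forall>m n. n_m m + 1 \<le> n \<and> n \<le> n_m m + l_m m - 1 \<longrightarrow> SR x n = gamma_m m / (2 * sqrt 2) \<and> CR x n = gamma_m m * sqrt 2 / 2 \<and> MR x n = 2"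
  proof (intro allI impI)
    fix m n assume n: "n_m m + 1 \<le> n \<and> n \<le> n_m m + l_m m - 1"
    define K where "K = (2::nat)^m"
    have K: "K \<ge> 1" unfolding K_def by simp
    define k where "k = n - n_m m"
    have nk: "n = n_m m + k" "k \<le> l_m m" using n unfolding k_def by auto
    have lv: "x ` {1..n_m m} = AA K" using lev[of m] unfolding K_def .
    have S0: "AA K \<subseteq> x ` {1..n_m m + k} \<and> x ` {1..n_m m + k} \<subseteq> BB K \<and> card (x ` {1..n_m m + k}) = n_m m + k"
      by (rule stage1[OF greedy K_def lv nk(2)])
    have S: "AA K \<subseteq> x ` {1..n}" "x ` {1..n} \<subseteq> BB K" "card (x ` {1..n}) = n"
      using S0 nk(1) by simp_all
    have cA: "card (AA K) = n_m m" "card (BB K) = n_m m + l_m m" using card_AA_m card_BB_m unfolding K_def by auto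
    have sr: "SR x n = sqrt 2/(2*real K)/2" by (rule SR1[OF K S]) (use cA n S(3) in linarith)
    have cr: "CR x n = sqrt 2/(2*real K)" by (rule CR1[OF K _ S(1,2)]) (use cA n S(3) in auto)
    have kpos: "real K > 0" using K by simp
    show "SR x n = gamma_m m / (2 * sqrt 2) \<and> CR x n = gamma_m m * sqrt 2 / 2 \<and> MR x n = 2"
      unfolding MR_def sr cr g K_def[symmetric] using kpos ar1[OF kpos] by (simp add: field_simps)
  qed
  have H3: "\<forall>m n. n = n_m m + l_m m \<longrightarrow> SR x n = gamma_m m / (2 * sqrt 2) \<and> CR x n = gamma_m m / 2 \<and> MR x n = sqrt 2"
  proof (intro allI impI)
    fix m n assume n: "n = n_m m + l_m m"
    define K where "K = (2::nat)^m"
    have K: "K \<ge> 1" unfolding K_def by simp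
    have lv: "x ` {1..n_m m} = AA K" using lev[of m] unfolding K_def .
    have X: "x ` {1..n} = BB K" using stage1_end[OF greedy K_def lv] n by simp
    have cA: "card (AA K) = n_m m" "card (BB K) = n_m m + l_m m" using card_AA_m card_BB_m unfolding K_def by auto
    have sr: "SR x n = sqrt 2/(2*real K)/2"
      by (rule SR1[OF K]) (use X cA n BB_sub[OF K] AA_lt_BB[OF K] in auto)
    have cr: "CR x n = 1/(2*real K)"
      by (rule CR2[OF K]) (use n1[of m] X n BB_sub[OF K] BB_lt_AA2[OF K] in auto)
    have kpos: "real K > 0" using K by simp
    show "SR x n = gamma_m m / (2 * sqrt 2) \<and> CR x n = gamma_m m / 2 \<and> MR x n = sqrt 2"
      unfolding MR_def sr cr g K_def[symmetric] using kpos ar1[OF kpos] ar2[OF kpos] by (simp add: field_simps)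
  qed
  have H4: "\<forall>m n. n_m m + l_m m + 1 \<le> n \<and> n \<le> n_m (Suc m) - 1 \<longrightarrow> SR x n = gamma_m m / 4 \<and> CR x n = gamma_m m / 2 \<and> MR x n = 2"
  proof (intro allI impI)
    fix m n assume n: "n_m m + l_m m + 1 \<le> n \<and> n \<le> n_m (Suc m) - 1"
    define K where "K = (2::nat)^m"
    have K: "K \<ge> 1" unfolding K_def by simp
    define k where "k = n - (n_m m + l_m m)"
    have nk: "n = n_m m + l_m m + k" "k \<le> n_m (Suc m) - (n_m m + l_m m)" using n unfolding k_def by auto
    have lv: "x ` {1..n_m m} = AA K" using lev[of m] unfolding K_def .
    have S0: "BB K \<subseteq> x ` {1..n_m m + l_m m + k} \<and> x ` {1..n_m m + l_m m + k} \<subseteq> AA (2*K) \<and> card (x ` {1..n_m m + l_m m + k}) = n_m m + l_m m + k"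
      by (rule stage2[OF greedy K_def lv nk(2)])
    have S: "BB K \<subseteq> x ` {1..n}" "x ` {1..n} \<subseteq> AA (2*K)" "card (x ` {1..n}) = n"
      using S0 nk(1) by simp_all
    have cA: "card (BB K) = n_m m + l_m m" "card (AA (2*K)) = n_m (Suc m)" using card_BB_m card_AA_Suc unfolding K_def by auto
    have sr: "SR x n = 1/(2*real K)/2" by (rule SR2[OF K S]) (use cA n S(3) in linarith)
    have cr: "CR x n = 1/(2*real K)" by (rule CR2[OF K _ S(1,2)]) (use cA n S(3) in auto)
    have kpos: "real K > 0" using K by simp
    show "SR x n = gamma_m m / 4 \<and> CR x n = gamma_m m / 2 \<and> MR x n = 2"
      unfolding MR_def sr cr g K_def[symmetric] using kpos by (simp add: field_simps)
  qed
  show ?thesis using H1 H2 H3 H4 by blast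
qed



end
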